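(* Let $\mathcal{L}:\mathbb{R}^d\to\mathbb{R}$ be differentiable, $L>0$, $\eta>0$, and $S\ge1$ an integer. Let random sequences $(\theta_t)$, $(\widehat g_t)$ in $\mathbb{R}^d$ be defined for all $t\ge -S$ with $\theta_{t+1}=\theta_t+\eta\,\widehat g_t$ for all $t\ge -S$, and for $t\ge0$ write $\widehat g_t=\nabla\mathcal{L}(\theta_t)+b_t+\xi_t$, where $(\mathcal{F}_t)_{t\ge0}$ is a filtration with $\theta_t,b_t$ $\mathcal{F}_t$-measurable. Assume for all $t\ge0$: (A.1) $\|\nabla\mathcal{L}(\theta)-\nabla\mathcal{L}(\theta')\|\le L\|\theta-\theta'\|$ for all $\theta,\theta'$; (A.2) $\mathbb{E}[\xi_t\mid\mathcal{F}_t]=0$ and $\mathbb{E}[\|\xi_t\|^2\mid\mathcal{F}_t]\le\sigma^2$ for some $\sigma^2>0$; (A.3) $\mathcal{L}^\star:=\sup_\theta\mathcal{L}(\theta)<\infty$; (A.4) $\eta\le\frac{1}{4L}$; (A.5) there is an integer $\tau_t$ with $1\le\tau_t\le S$ (the staleness), so that $\theta_t-\theta_{t-\tau_t}=\sum_{k=1}^{\tau_t}\eta\,\widehat g_{t-k}$; (A.6) there are (possibly random) matrices $B_t\in\mathbb{R}^{d\times d}$ and remainders $r_t$ with $b_t=B_t(\theta_t-\theta_{t-\tau_t})+r_t$ and $\mathbb{E}\|r_t\|\le\varepsilon_t$; (A.7) there is $\lambda_t\ge0$ with $\mathbb{E}[\widehat g_{t-1}^\top B_t\widehat g_{t-1}]\ge\lambda_t\,\mathbb{E}\|\widehat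 g_{t-1}\|^2$; (A.8) there are $\rho_t\in[0,1]$ and $\delta_t\ge0$ with $\mathbb{E}[\langle\nabla\mathcal{L}(\theta_t),B_t\widehat g_{t-1}\rangle]\ge\rho_t\,\mathbb{E}[\widehat g_{t-1}^\top B_t\widehat g_{t-1}]-\delta_t$. Then for every $T\ge1$, \[ \min_{0\le t\le T-1}\mathbb{E}\|\nabla\mathcal{L}(\theta_t)\|^2\le\frac{2(\mathcal{L}^\star-\mathcal{L}(\theta_0))}{\eta T}+2L\eta\sigma^2+\frac{4L\eta}{T}\sum_{t=0}^{T-1}\mathbb{E}\|b_t\|^2-\frac{2}{T}\sum_{t=0}^{T-1}\eta\,\rho_t\lambda_t\,\mathbb{E}\|\widehat g_{t-1}\|^2+\mathrm{Err}(T), \] where \[ \mathrm{Err}(T)=\frac{2}{T}\sum_{t=0}^{T-1}\Big(\eta\sum_{k=2}^{\tau_t}\mathbb{E}\big|\langle\nabla\mathcal{L}(\theta_t),B_t\widehat g_{t-k}\rangle\big|+\mathbb{E}\big[\|\nabla\mathcal{L}(\theta_t)\|\,\|r_t\|\big]+\eta\,\delta_t\Big). \]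
   Context: This models asynchronous GRPO as stochastic gradient ascent on a surrogate objective $\mathcal{L}$, with gradients computed from rollouts generated by a stale parameter $\theta_{t-\tau_t}$; $b_t$ is the staleness-induced bias, $\xi_t$ zero-mean noise. Norms are Euclidean; all expectations are assumed finite. *)

theory Defs
  imports "HOL-Probability.Probability"
begin

end

theory Submission
  imports Defs "HOL-Probability.Probability"
begin

lemma half_bound: "(x::real) * y \<le> (x\<^sup>2 + y\<^sup>2) / 2"
proof -
  have "0 \<le> (x - y)\<^sup>2" by simp
  then show ?thesis by (simp add: power2_eq_square field_simps)
qed

lemma descent:
  fixes Lf :: "real^'d \<Rightarrow> real" and gradL :: "real^'d \<Rightarrow> real^'d"
  assumes grad: "\<And>x. (Lf has_derivative (\<lambda>h. gradL x \<bullet> h)) (at x)"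
    and A1: "\<And>x y. norm (gradL x - gradL y) \<le> Lip * norm (x - y)"
    and Lnn: "Lip \<ge> 0"
  shows "Lf y \<ge> Lf x + gradL x \<bullet> (y - x) - Lip * (norm (y - x))\<^sup>2"
proof -
  define v where "v = y - x"
  define \<phi> where "\<phi> = (\<lambda>s::real. Lf (x + s *\<^sub>R v))"
  have D: "DERIV \<phi> s :> gradL (x + s *\<^sub>R v) \<bullet> v" for s
  proof -
    have "((\<lambda>s. x + s *\<^sub>R v) has_derivative (\<lambda>h. h *\<^sub>R v)) (at s)"
      by (auto intro!: derivative_eq_intros)
    from has_derivative_compose[OF this grad]
    have "(\<phi> has_derivative (\<lambda>h. gradL (x + s *\<^sub>R v) \<bullet> (h *\<^sub>R v))) (at s)"
      unfolding \<phi>_def by (simp add: o_def)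
    moreover have "(\<lambda>h. gradL (x + s *\<^sub>R v) \<bullet> (h *\<^sub>R v)) = (*) (gradL (x + s *\<^sub>R v) \<bullet> v)"
      by (auto simp: fun_eq_iff)
    ultimately show ?thesis
      by (simp add: has_field_derivative_def)
  qed
  obtain c where c: "0 < c" "c < 1" "\<phi> 1 - \<phi> 0 = (1 - 0) * (gradL (x + c *\<^sub>R v) \<bullet> v)"
    using MVT2[of 0 1 \<phi> "\<lambda>s. gradL (x + s *\<^sub>R v) \<bullet> v"] D by auto
  have "\<bar>gradL (x + c *\<^sub>R v) \<bullet> v - gradL x \<bullet> v\<bar> \<le> norm (gradL (x + c *\<^sub>R v) - gradL x) * norm v"
    by (metis Cauchy_Schwarz_ineq2 inner_diff_left)
  also have "\<dots> \<le> Lip * norm (c *\<^sub>R v) * norm v"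
    using A1[of "x + c *\<^sub>R v" x] by (intro mult_right_mono) auto
  also have "\<dots> = Lip * c * (norm v)\<^sup>2" using c by (simp add: power2_eq_square)
  also have "\<dots> \<le> Lip * (norm v)\<^sup>2"
  proof -
    have "Lip * c \<le> Lip" using c Lnn by (simp add: mult_left_le)
    then show ?thesis by (intro mult_right_mono) auto
  qed
  finally have "gradL (x + c *\<^sub>R v) \<bullet> v \<ge> gradL x \<bullet> v - Lip * (norm v)\<^sup>2" by linarith
  then show ?thesis using c(3) unfolding \<phi>_def v_def by simp
qed

lemma bm_nth[measurable (raw)]:
  fixes f :: "'m \<Rightarrow> real^'n"
  shows "f \<in> borel_measurable M \<Longrightarrow> (\<lambda>x. f x $ i) \<in> borel_measurable M"
  by (rule measurable_compose[OF _ borel_measurable_nth])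

lemma inner_zero:
  fixes h xi :: "'m \<Rightarrow> real^'d"
  assumes P: "prob_space M" and sub: "subalgebra M F"
    and hF: "h \<in> borel_measurable F" and xiM: "xi \<in> borel_measurable M"
    and ce: "\<And>i. AE \<omega> in M. real_cond_exp M F (\<lambda>\<omega>. xi \<omega> $ i) \<omega> = 0"
    and ih: "integrable M (\<lambda>\<omega>. (norm (h \<omega>))\<^sup>2)" and ix: "integrable M (\<lambda>\<omega>. (norm (xi \<omega>))\<^sup>2)"
  shows "integrable M (\<lambda>\<omega>. h \<omega> \<bullet> xi \<omega>)" "(\<integral>\<omega>. h \<omega> \<bullet> xi \<omega> \<partial>M) = 0"
proof -
  interpret prob_space M by (rule P)
  interpret finite_measure_subalgebra M F
    by (simp add: finite_measure_axioms finite_measure_subalgebra.intro finite_measure_subalgebra_axioms_def sub)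
  have hM: "h \<in> borel_measurable M" using sub hF by (rule measurable_from_subalg)
  have ib: "integrable M (\<lambda>\<omega>. ((norm (h \<omega>))\<^sup>2 + (norm (xi \<omega>))\<^sup>2) / 2)"
    using ih ix by auto
  have comp: "integrable M (\<lambda>\<omega>. h \<omega> $ i * xi \<omega> $ i)" for i
  proof (rule Bochner_Integration.integrable_bound[OF ib])
    show "(\<lambda>\<omega>. h \<omega> $ i * xi \<omega> $ i) \<in> borel_measurable M" using hM xiM by measurable
    show "AE \<omega> in M. norm (h \<omega> $ i * xi \<omega> $ i) \<le> norm (((norm (h \<omega>))\<^sup>2 + (norm (xi \<omega>))\<^sup>2) / 2)"
    proof (intro AE_I2)
      fix \<omega>
      have "\<bar>h \<omega> $ i\<bar> * \<bar>xi \<omega> $ i\<bar> \<le> norm (h \<omega>) * norm (xi \<omega>)"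
        by (intro mult_mono) (auto simp: component_le_norm_cart)
      also have "\<dots> \<le> ((norm (h \<omega>))\<^sup>2 + (norm (xi \<omega>))\<^sup>2) / 2"
        by (rule half_bound)
      finally show "norm (h \<omega> $ i * xi \<omega> $ i) \<le> norm (((norm (h \<omega>))\<^sup>2 + (norm (xi \<omega>))\<^sup>2) / 2)"
        by (simp add: abs_mult)
    qed
  qed
  have z: "(\<integral>\<omega>. h \<omega> $ i * xi \<omega> $ i \<partial>M) = 0" for i
  proof -
    have hiF: "(\<lambda>\<omega>. h \<omega> $ i) \<in> borel_measurable F" using hF by measurable
    have xiiM: "(\<lambda>\<omega>. xi \<omega> $ i) \<in> borel_measurable M" using xiM by measurable
    have "(\<integral>\<omega>. h \<omega> $ i * xi \<omega> $ i \<partial>M) = (\<integral>\<omega>. h \<omega> $ i * real_cond_exp M F (\<lambda>\<omega>. xi \<omega> $ i) \<omega> \<partial>M)"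
      using real_cond_exp_intg(2)[OF comp hiF xiiM] by simp
    also have "\<dots> = (\<integral>\<omega>. 0 \<partial>M)"
      by (rule integral_cong_AE) (use ce[of i] hiF xiiM in \<open>auto elim!: AE_mp intro!: measurable_from_subalg[OF sub]\<close>)
    finally show ?thesis by simp
  qed
  have eq: "(\<lambda>\<omega>. h \<omega> \<bullet> xi \<omega>) = (\<lambda>\<omega>. \<Sum>i\<in>UNIV. h \<omega> $ i * xi \<omega> $ i)"
    by (auto simp: inner_vec_def)
  show "integrable M (\<lambda>\<omega>. h \<omega> \<bullet> xi \<omega>)" unfolding eq using comp by auto
  show "(\<integral>\<omega>. h \<omega> \<bullet> xi \<omega> \<partial>M) = 0" unfolding eq
    using comp z by (simp add: Bochner_Integration.integral_sum)
qed

lemma mv_sum: "(A::real^'n^'m) *v (\<Sum>k\<in>S. f k) = (\<Sum>k\<in>S. A *v f k)"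
  using linear_sum[OF matrix_vector_mul_linear] by (simp add: o_def)

lemma sfs: "prob_space M \<Longrightarrow> subalgebra M F \<Longrightarrow> sigma_finite_subalgebra M F"
  by (intro finite_measure_subalgebra_is_sigma_finite finite_measure_subalgebra.intro)
     (auto simp: prob_space_def finite_measure_subalgebra_axioms_def)

lemma inner_int:
  fixes u v :: "'m \<Rightarrow> real^'d"
  assumes [measurable]: "u \<in> borel_measurable M" "v \<in> borel_measurable M"
    and "integrable M (\<lambda>\<omega>. (norm (u \<omega>))\<^sup>2)" "integrable M (\<lambda>\<omega>. (norm (v \<omega>))\<^sup>2)"
  shows "integrable M (\<lambda>\<omega>. u \<omega> \<bullet> v \<omega>)"
proof (rule Bochner_Integration.integrable_bound)
  show "integrable M (\<lambda>\<omega>. ((norm (u \<omega>))\<^sup>2 + (norm (v \<omega>))\<^sup>2) / 2)" using assms by auto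
  show "(\<lambda>\<omega>. u \<omega> \<bullet> v \<omega>) \<in> borel_measurable M" by measurable
  show "AE \<omega> in M. norm (u \<omega> \<bullet> v \<omega>) \<le> norm (((norm (u \<omega>))\<^sup>2 + (norm (v \<omega>))\<^sup>2) / 2)"
  proof (intro AE_I2)
    fix \<omega>
    have "\<bar>u \<omega> \<bullet> v \<omega>\<bar> \<le> norm (u \<omega>) * norm (v \<omega>)" by (rule Cauchy_Schwarz_ineq2)
    also have "\<dots> \<le> ((norm (u \<omega>))\<^sup>2 + (norm (v \<omega>))\<^sup>2) / 2"
      by (rule half_bound)
    finally show "norm (u \<omega> \<bullet> v \<omega>) \<le> norm (((norm (u \<omega>))\<^sup>2 + (norm (v \<omega>))\<^sup>2) / 2)"
      by simp
  qed
qed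

lemma final_alg:
  fixes m A Ys Zs Bs \<eta> T Lip \<sigma>2 :: real
  assumes e: "\<eta> > 0" and t: "T > 0"
    and h: "\<eta> / 2 * (T * m) \<le> A + \<eta> * Ys - \<eta> * Zs + 2 * Lip * \<eta>\<^sup>2 * Bs + T * (Lip * \<eta>\<^sup>2 * \<sigma>2)"
  shows "m \<le> 2 * A / (\<eta> * T) + 2 * Lip * \<eta> * \<sigma>2 + 4 * Lip * \<eta> / T * Bs - 2 / T * Zs + 2 / T * Ys"
proof -
  have "m = (2 / (\<eta> * T)) * (\<eta> / 2 * (T * m))" using e t by (simp add: field_simps)
  also have "\<dots> \<le> (2 / (\<eta> * T)) * (A + \<eta> * Ys - \<eta> * Zs + 2 * Lip * \<eta>\<^sup>2 * Bs + T * (Lip * \<eta>\<^sup>2 * \<sigma>2))"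
    using e t h by (intro mult_left_mono) auto
  also have "\<dots> = 2 * A / (\<eta> * T) + 2 * Lip * \<eta> * \<sigma>2 + 4 * Lip * \<eta> / T * Bs - 2 / T * Zs + 2 / T * Ys"
    using e t by (simp add: field_simps power2_eq_square)
  finally show ?thesis .
qed

theorem theoremE3:
  fixes M :: "'m measure"
    and F :: "nat \<Rightarrow> 'm measure"
    and Lf :: "real^'d \<Rightarrow> real"
    and gradL :: "real^'d \<Rightarrow> real^'d"
    and Lip \<eta> \<sigma>2 :: real
    and S :: nat
    and \<theta> g :: "int \<Rightarrow> 'm \<Rightarrow> real^'d"
    and b \<xi> r :: "nat \<Rightarrow> 'm \<Rightarrow> real^'d"
    and B :: "nat \<Rightarrow> 'm \<Rightarrow> real^'d^'d"
    and \<tau> :: "nat \<Rightarrow> nat"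
    and \<epsilon> lam \<rho> \<delta> :: "nat \<Rightarrow> real"
    and T :: nat
  assumes prob: "prob_space M"
    and filt_sub: "\<And>t. subalgebra M (F t)"
    and filt_mono: "\<And>s t. s \<le> t \<Longrightarrow> sets (F s) \<subseteq> sets (F t)"
    and grad: "\<And>x. (Lf has_derivative (\<lambda>h. gradL x \<bullet> h)) (at x)"
    and Lpos: "Lip > 0" and etapos: "\<eta> > 0" and S1: "S \<ge> 1"
    and \<theta>_meas: "\<And>t. t \<ge> - int S \<Longrightarrow> \<theta> t \<in> borel_measurable M"
    and g_meas: "\<And>t. t \<ge> - int S \<Longrightarrow> g t \<in> borel_measurable M"
    and B_meas: "\<And>t. B t \<in> borel_measurable M"
    and step: "\<And>t. t \<ge> - int S \<Longrightarrow> \<theta> (t + 1) = (\<lambda>\<omega>. \<theta> t \<omega> + \<eta> *\<^sub>R g t \<omega>)"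
    and decomp: "\<And>t \<omega>. g (int t) \<omega> = gradL (\<theta> (int t) \<omega>) + b t \<omega> + \<xi> t \<omega>"
    and \<theta>_adapt: "\<And>t. \<theta> (int t) \<in> borel_measurable (F t)"
    and b_adapt: "\<And>t. b t \<in> borel_measurable (F t)"
    \<comment> \<open>(A.1)\<close>
    and A1: "\<And>x y. norm (gradL x - gradL y) \<le> Lip * norm (x - y)"
    \<comment> \<open>(A.2)\<close>
    and sigpos: "\<sigma>2 > 0"
    and A2_mean: "\<And>t i. AE \<omega> in M. real_cond_exp M (F t) (\<lambda>\<omega>. \<xi> t \<omega> $ i) \<omega> = 0"
    and A2_var: "\<And>t. AE \<omega> in M. real_cond_exp M (F t) (\<lambda>\<omega>. (norm (\<xi> t \<omega>))\<^sup>2) \<omega> \<le> \<sigma>2"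
    \<comment> \<open>(A.3)\<close>
    and A3: "bdd_above (range Lf)"
    \<comment> \<open>(A.4)\<close>
    and A4: "\<eta> \<le> 1 / (4 * Lip)"
    \<comment> \<open>(A.5)\<close>
    and A5_range: "\<And>t. 1 \<le> \<tau> t \<and> \<tau> t \<le> S"
    and A5: "\<And>t \<omega>. \<theta> (int t) \<omega> - \<theta> (int t - int (\<tau> t)) \<omega>
                 = (\<Sum>k=1..\<tau> t. \<eta> *\<^sub>R g (int t - int k) \<omega>)"
    \<comment> \<open>(A.6)\<close>
    and A6: "\<And>t \<omega>. b t \<omega> = B t \<omega> *v (\<theta> (int t) \<omega> - \<theta> (int t - int (\<tau> t)) \<omega>) + r t \<omega>"
    and A6_eps: "\<And>t. (\<integral>\<omega>. norm (r t \<omega>) \<partial>M) \<le> \<epsilon> t"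
    \<comment> \<open>(A.7)\<close>
    and A7_nonneg: "\<And>t. lam t \<ge> 0"
    and A7: "\<And>t. (\<integral>\<omega>. g (int t - 1) \<omega> \<bullet> (B t \<omega> *v g (int t - 1) \<omega>) \<partial>M)
                  \<ge> lam t * (\<integral>\<omega>. (norm (g (int t - 1) \<omega>))\<^sup>2 \<partial>M)"
    \<comment> \<open>(A.8)\<close>
    and A8_rho: "\<And>t. 0 \<le> \<rho> t \<and> \<rho> t \<le> 1"
    and A8_delta: "\<And>t. \<delta> t \<ge> 0"
    and A8: "\<And>t. (\<integral>\<omega>. gradL (\<theta> (int t) \<omega>) \<bullet> (B t \<omega> *v g (int t - 1) \<omega>) \<partial>M)
                  \<ge> \<rho> t * (\<integral>\<omega>. g (int t - 1) \<omega> \<bullet> (B t \<omega> *v g (int t - 1) \<omega>) \<partial>M) - \<delta> t"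
    \<comment> \<open>all expectations are finite\<close>
    and int_L: "\<And>t. integrable M (\<lambda>\<omega>. Lf (\<theta> (int t) \<omega>))"
    and int_g: "\<And>t. t \<ge> - int S \<Longrightarrow> integrable M (\<lambda>\<omega>. (norm (g t \<omega>))\<^sup>2)"
    and int_grad: "\<And>t. integrable M (\<lambda>\<omega>. (norm (gradL (\<theta> (int t) \<omega>)))\<^sup>2)"
    and int_b: "\<And>t. integrable M (\<lambda>\<omega>. (norm (b t \<omega>))\<^sup>2)"
    and int_\<xi>: "\<And>t. integrable M (\<lambda>\<omega>. (norm (\<xi> t \<omega>))\<^sup>2)"
    and int_\<xi>i: "\<And>t i. integrable M (\<lambda>\<omega>. \<xi> t \<omega> $ i)"
    and int_r: "\<And>t. integrable M (\<lambda>\<omega>. norm (r t \<omega>))"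
    and int_gr: "\<And>t. integrable M (\<lambda>\<omega>. norm (gradL (\<theta> (int t) \<omega>)) * norm (r t \<omega>))"
    and int_gBg: "\<And>t. integrable M (\<lambda>\<omega>. g (int t - 1) \<omega> \<bullet> (B t \<omega> *v g (int t - 1) \<omega>))"
    and int_cross: "\<And>t k. 1 \<le> k \<Longrightarrow> k \<le> \<tau> t \<Longrightarrow>
        integrable M (\<lambda>\<omega>. gradL (\<theta> (int t) \<omega>) \<bullet> (B t \<omega> *v g (int t - int k) \<omega>))"
    and T1: "T \<ge> 1"
  shows "Min ((\<lambda>t. \<integral>\<omega>. (norm (gradL (\<theta> (int t) \<omega>)))\<^sup>2 \<partial>M) ` {0..<T})
    \<le> 2 * ((SUP x. Lf x) - (\<integral>\<omega>. Lf (\<theta> 0 \<omega>) \<partial>M)) / (\<eta> * real T)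
      + 2 * Lip * \<eta> * \<sigma>2
      + 4 * Lip * \<eta> / real T * (\<Sum>t<T. \<integral>\<omega>. (norm (b t \<omega>))\<^sup>2 \<partial>M)
      - 2 / real T * (\<Sum>t<T. \<eta> * \<rho> t * lam t * (\<integral>\<omega>. (norm (g (int t - 1) \<omega>))\<^sup>2 \<partial>M))
      + 2 / real T * (\<Sum>t<T.
            \<eta> * (\<Sum>k=2..\<tau> t. \<integral>\<omega>. \<bar>gradL (\<theta> (int t) \<omega>) \<bullet> (B t \<omega> *v g (int t - int k) \<omega>)\<bar> \<partial>M)
          + (\<integral>\<omega>. norm (gradL (\<theta> (int t) \<omega>)) * norm (r t \<omega>) \<partial>M)
          + \<eta> * \<delta> t)"
proof -
  interpret P: prob_space M by (rule prob)
  have Lnn: "Lip \<ge> 0" using Lpos by simp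
  have gcont: "continuous_on UNIV gradL"
  proof (rule lipschitz_on_continuous_on)
    show "Lip-lipschitz_on UNIV gradL"
      by (rule lipschitz_onI) (use A1 Lnn in \<open>auto simp: dist_norm\<close>)
  qed
  have gB[measurable]: "gradL \<in> borel_measurable borel"
    by (rule borel_measurable_continuous_onI[OF gcont])
  have Lcont: "continuous_on UNIV Lf"
    by (intro continuous_at_imp_continuous_on ballI has_derivative_continuous[OF grad])
  have LB[measurable]: "Lf \<in> borel_measurable borel"
    by (rule borel_measurable_continuous_onI[OF Lcont])
  have thM[measurable]: "\<theta> (int t) \<in> borel_measurable M" for t
    using \<theta>_meas[of "int t"] by simp
  have gM[measurable]: "g (int t) \<in> borel_measurable M" for t
    using g_meas[of "int t"] by simp
  have bM[measurable]: "b t \<in> borel_measurable M" for t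
    using measurable_from_subalg[OF filt_sub b_adapt] .
  have GM[measurable]: "(\<lambda>\<omega>. gradL (\<theta> (int t) \<omega>)) \<in> borel_measurable M" for t
    by measurable
  have GF: "(\<lambda>\<omega>. gradL (\<theta> (int t) \<omega>)) \<in> borel_measurable (F t)" for t
    using \<theta>_adapt[of t] by measurable
  have xiM[measurable]: "\<xi> t \<in> borel_measurable M" for t
  proof -
    have "\<xi> t = (\<lambda>\<omega>. g (int t) \<omega> - gradL (\<theta> (int t) \<omega>) - b t \<omega>)"
      using decomp by (auto simp: fun_eq_iff algebra_simps)
    moreover have "(\<lambda>\<omega>. g (int t) \<omega> - gradL (\<theta> (int t) \<omega>) - b t \<omega>) \<in> borel_measurable M"
      by measurable
    ultimately show ?thesis by simp
  qed
  have xi2: "(\<integral>\<omega>. (norm (\<xi> t \<omega>))\<^sup>2 \<partial>M) \<le> \<sigma>2" for t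
  proof -
    interpret S: sigma_finite_subalgebra M "F t" by (rule sfs[OF prob filt_sub])
    have "(\<integral>\<omega>. (norm (\<xi> t \<omega>))\<^sup>2 \<partial>M) = (\<integral>\<omega>. real_cond_exp M (F t) (\<lambda>\<omega>. (norm (\<xi> t \<omega>))\<^sup>2) \<omega> \<partial>M)"
      using S.real_cond_exp_int(2)[OF int_\<xi>[of t]] by simp
    also have "\<dots> \<le> (\<integral>\<omega>. \<sigma>2 \<partial>M)"
      by (rule integral_mono_AE) (use S.real_cond_exp_int(1)[OF int_\<xi>[of t]] A2_var[of t] in auto)
    also have "\<dots> = \<sigma>2" by (simp add: P.prob_space)
    finally show ?thesis .
  qed
  note Gxi = inner_zero[OF prob filt_sub GF xiM A2_mean int_grad int_\<xi>]
  note bxi = inner_zero[OF prob filt_sub b_adapt xiM A2_mean int_b int_\<xi>]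
  have Gb: "integrable M (\<lambda>\<omega>. gradL (\<theta> (int t) \<omega>) \<bullet> b t \<omega>)" for t
    by (rule inner_int[OF GM bM int_grad int_b])
  have Leta: "Lip * \<eta> \<le> 1 / 4"
    using A4 Lpos etapos by (simp add: field_simps)
  have stepI: "\<eta> / 2 * (\<integral>\<omega>. (norm (gradL (\<theta> (int t) \<omega>)))\<^sup>2 \<partial>M)
     \<le> (\<integral>\<omega>. Lf (\<theta> (int (Suc t)) \<omega>) \<partial>M) - (\<integral>\<omega>. Lf (\<theta> (int t) \<omega>) \<partial>M)
       - \<eta> * (\<integral>\<omega>. gradL (\<theta> (int t) \<omega>) \<bullet> b t \<omega> \<partial>M)
       + 2 * Lip * \<eta>\<^sup>2 * (\<integral>\<omega>. (norm (b t \<omega>))\<^sup>2 \<partial>M) + Lip * \<eta>\<^sup>2 * \<sigma>2" for t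
  proof -
    have th1: "\<theta> (int (Suc t)) = (\<lambda>\<omega>. \<theta> (int t) \<omega> + \<eta> *\<^sub>R g (int t) \<omega>)"
      using step[of "int t"] by (simp add: add.commute)
    have pw: "Lf (\<theta> (int t) \<omega>) + (\<eta> - 2*Lip*\<eta>\<^sup>2) * (norm (gradL (\<theta> (int t) \<omega>)))\<^sup>2
        + \<eta> * (gradL (\<theta> (int t) \<omega>) \<bullet> b t \<omega>) + \<eta> * (gradL (\<theta> (int t) \<omega>) \<bullet> \<xi> t \<omega>)
        - 2*Lip*\<eta>\<^sup>2 * (norm (b t \<omega>))\<^sup>2
        - 2*Lip*\<eta>\<^sup>2 * (gradL (\<theta> (int t) \<omega>) \<bullet> \<xi> t \<omega>) - 2*Lip*\<eta>\<^sup>2 * (b t \<omega> \<bullet> \<xi> t \<omega>)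
        - Lip*\<eta>\<^sup>2 * (norm (\<xi> t \<omega>))\<^sup>2 \<le> Lf (\<theta> (int (Suc t)) \<omega>)" for \<omega>
    proof -
      define G where "G = gradL (\<theta> (int t) \<omega>)"
      define bb where "bb = b t \<omega>"
      define x where "x = \<xi> t \<omega>"
      have gd: "g (int t) \<omega> = G + bb + x" using decomp[of t \<omega>] by (simp add: G_def bb_def x_def)
      have d: "Lf (\<theta> (int t) \<omega>) + G \<bullet> (\<eta> *\<^sub>R g (int t) \<omega>) - Lip * (norm (\<eta> *\<^sub>R g (int t) \<omega>))\<^sup>2
               \<le> Lf (\<theta> (int (Suc t)) \<omega>)"
        using descent[OF grad A1 Lnn, of "\<theta> (int t) \<omega>" "\<theta> (int (Suc t)) \<omega>"] th1
        by (simp add: G_def)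
      have n2: "(norm (G + bb + x))\<^sup>2 = (norm (G+bb))\<^sup>2 + 2 * (G \<bullet> x) + 2 * (bb \<bullet> x) + (norm x)\<^sup>2"
        by (simp add: power2_norm_eq_inner algebra_simps inner_commute)
      have n3: "(norm (G+bb))\<^sup>2 \<le> 2*(norm G)\<^sup>2 + 2*(norm bb)\<^sup>2"
      proof -
        have "norm (G+bb) \<le> norm G + norm bb" by (rule norm_triangle_ineq)
        then have "(norm (G+bb))\<^sup>2 \<le> (norm G + norm bb)\<^sup>2" by (intro power_mono) auto
        also have "\<dots> \<le> 2*(norm G)\<^sup>2 + 2*(norm bb)\<^sup>2"
          using sum_squares_bound[of "norm G" "norm bb"] by (simp add: power2_sum)
        finally show ?thesis .
      qed
      have e1: "G \<bullet> (\<eta> *\<^sub>R g (int t) \<omega>) = \<eta> * (norm G)\<^sup>2 + \<eta> * (G \<bullet> bb) + \<eta> * (G \<bullet> x)"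
        by (simp add: gd inner_add_right power2_norm_eq_inner algebra_simps)
      have e2: "(norm (\<eta> *\<^sub>R g (int t) \<omega>))\<^sup>2 = \<eta>\<^sup>2 * (norm (G + bb + x))\<^sup>2"
        by (simp add: gd power_mult_distrib)
      have c0: "Lip * \<eta>\<^sup>2 \<ge> 0" using Lnn by simp
      have m: "Lip*\<eta>\<^sup>2 * (norm (G+bb))\<^sup>2 \<le> Lip*\<eta>\<^sup>2 * (2*(norm G)\<^sup>2 + 2*(norm bb)\<^sup>2)"
        by (rule mult_left_mono[OF n3 c0])
      have "Lf (\<theta> (int t) \<omega>) + (\<eta> - 2*Lip*\<eta>\<^sup>2) * (norm G)\<^sup>2 + \<eta> * (G \<bullet> bb) + \<eta> * (G \<bullet> x)
        - 2*Lip*\<eta>\<^sup>2 * (norm bb)\<^sup>2 - 2*Lip*\<eta>\<^sup>2 * (G \<bullet> x) - 2*Lip*\<eta>\<^sup>2 * (bb \<bullet> x)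
        - Lip*\<eta>\<^sup>2 * (norm x)\<^sup>2 \<le> Lf (\<theta> (int (Suc t)) \<omega>)"
        using d m unfolding e1 e2 n2 by (simp add: algebra_simps)
      then show ?thesis by (simp add: G_def bb_def x_def)
    qed
    have I1: "integrable M (\<lambda>\<omega>. gradL (\<theta> (int t) \<omega>) \<bullet> \<xi> t \<omega>)" by (rule Gxi(1))
    have I2: "integrable M (\<lambda>\<omega>. b t \<omega> \<bullet> \<xi> t \<omega>)" by (rule bxi(1))
    note I = int_L[of t] int_grad[of t] Gb[of t] I1 I2 int_b[of t] int_\<xi>[of t]
    have "(\<integral>\<omega>. Lf (\<theta> (int t) \<omega>) + (\<eta> - 2*Lip*\<eta>\<^sup>2) * (norm (gradL (\<theta> (int t) \<omega>)))\<^sup>2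
        + \<eta> * (gradL (\<theta> (int t) \<omega>) \<bullet> b t \<omega>) + \<eta> * (gradL (\<theta> (int t) \<omega>) \<bullet> \<xi> t \<omega>)
        - 2*Lip*\<eta>\<^sup>2 * (norm (b t \<omega>))\<^sup>2
        - 2*Lip*\<eta>\<^sup>2 * (gradL (\<theta> (int t) \<omega>) \<bullet> \<xi> t \<omega>) - 2*Lip*\<eta>\<^sup>2 * (b t \<omega> \<bullet> \<xi> t \<omega>)
        - Lip*\<eta>\<^sup>2 * (norm (\<xi> t \<omega>))\<^sup>2 \<partial>M) \<le> (\<integral>\<omega>. Lf (\<theta> (int (Suc t)) \<omega>) \<partial>M)"
      by (rule integral_mono[OF _ int_L[of "Suc t"] pw]) (use I in auto)
    also have "(\<integral>\<omega>. Lf (\<theta> (int t) \<omega>) + (\<eta> - 2*Lip*\<eta>\<^sup>2) * (norm (gradL (\<theta> (int t) \<omega>)))\<^sup>2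
        + \<eta> * (gradL (\<theta> (int t) \<omega>) \<bullet> b t \<omega>) + \<eta> * (gradL (\<theta> (int t) \<omega>) \<bullet> \<xi> t \<omega>)
        - 2*Lip*\<eta>\<^sup>2 * (norm (b t \<omega>))\<^sup>2
        - 2*Lip*\<eta>\<^sup>2 * (gradL (\<theta> (int t) \<omega>) \<bullet> \<xi> t \<omega>) - 2*Lip*\<eta>\<^sup>2 * (b t \<omega> \<bullet> \<xi> t \<omega>)
        - Lip*\<eta>\<^sup>2 * (norm (\<xi> t \<omega>))\<^sup>2 \<partial>M)
      = (\<integral>\<omega>. Lf (\<theta> (int t) \<omega>) \<partial>M) + (\<eta> - 2*Lip*\<eta>\<^sup>2) * (\<integral>\<omega>. (norm (gradL (\<theta> (int t) \<omega>)))\<^sup>2 \<partial>M)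
        + \<eta> * (\<integral>\<omega>. gradL (\<theta> (int t) \<omega>) \<bullet> b t \<omega> \<partial>M) + \<eta> * 0
        - 2*Lip*\<eta>\<^sup>2 * (\<integral>\<omega>. (norm (b t \<omega>))\<^sup>2 \<partial>M) - 2*Lip*\<eta>\<^sup>2 * 0 - 2*Lip*\<eta>\<^sup>2 * 0
        - Lip*\<eta>\<^sup>2 * (\<integral>\<omega>. (norm (\<xi> t \<omega>))\<^sup>2 \<partial>M)"
      using I Gxi(2)[of t] bxi(2)[of t] by simp
    finally have main: "(\<integral>\<omega>. Lf (\<theta> (int t) \<omega>) \<partial>M) + (\<eta> - 2*Lip*\<eta>\<^sup>2) * (\<integral>\<omega>. (norm (gradL (\<theta> (int t) \<omega>)))\<^sup>2 \<partial>M)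
        + \<eta> * (\<integral>\<omega>. gradL (\<theta> (int t) \<omega>) \<bullet> b t \<omega> \<partial>M)
        - 2*Lip*\<eta>\<^sup>2 * (\<integral>\<omega>. (norm (b t \<omega>))\<^sup>2 \<partial>M)
        - Lip*\<eta>\<^sup>2 * (\<integral>\<omega>. (norm (\<xi> t \<omega>))\<^sup>2 \<partial>M) \<le> (\<integral>\<omega>. Lf (\<theta> (int (Suc t)) \<omega>) \<partial>M)"
      by simp
    have a0: "0 \<le> (\<integral>\<omega>. (norm (gradL (\<theta> (int t) \<omega>)))\<^sup>2 \<partial>M)" by simp
    have c1: "\<eta> / 2 \<le> \<eta> - 2*Lip*\<eta>\<^sup>2"
    proof -
      have "2*Lip*\<eta>\<^sup>2 = \<eta> * (2 * (Lip * \<eta>))" by (simp add: power2_eq_square)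
      also have "\<dots> \<le> \<eta> * (1/2)" using Leta etapos by (intro mult_left_mono) auto
      finally show ?thesis by simp
    qed
    have "\<eta> / 2 * (\<integral>\<omega>. (norm (gradL (\<theta> (int t) \<omega>)))\<^sup>2 \<partial>M)
        \<le> (\<eta> - 2*Lip*\<eta>\<^sup>2) * (\<integral>\<omega>. (norm (gradL (\<theta> (int t) \<omega>)))\<^sup>2 \<partial>M)"
      by (rule mult_right_mono[OF c1 a0])
    moreover have "Lip*\<eta>\<^sup>2 * (\<integral>\<omega>. (norm (\<xi> t \<omega>))\<^sup>2 \<partial>M) \<le> Lip*\<eta>\<^sup>2 * \<sigma>2"
      using xi2[of t] Lnn by (intro mult_left_mono) auto
    ultimately show ?thesis using main by linarith
  qed
  define Y where "Y = (\<lambda>t. \<eta> * (\<Sum>k=2..\<tau> t. \<integral>\<omega>. \<bar>gradL (\<theta> (int t) \<omega>) \<bullet> (B t \<omega> *v g (int t - int k) \<omega>)\<bar> \<partial>M)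
          + (\<integral>\<omega>. norm (gradL (\<theta> (int t) \<omega>)) * norm (r t \<omega>) \<partial>M)
          + \<eta> * \<delta> t)"
  define Z where "Z = (\<lambda>t. \<eta> * \<rho> t * lam t * (\<integral>\<omega>. (norm (g (int t - 1) \<omega>))\<^sup>2 \<partial>M))"
  have bias: "- (\<integral>\<omega>. gradL (\<theta> (int t) \<omega>) \<bullet> b t \<omega> \<partial>M) \<le> Y t - Z t" for t
  proof -
    have pwb: "gradL (\<theta> (int t) \<omega>) \<bullet> r t \<omega> = gradL (\<theta> (int t) \<omega>) \<bullet> b t \<omega>
       - \<eta> * (\<Sum>k=1..\<tau> t. gradL (\<theta> (int t) \<omega>) \<bullet> (B t \<omega> *v g (int t - int k) \<omega>))" for \<omega>
    proof -
      have "B t \<omega> *v (\<theta> (int t) \<omega> - \<theta> (int t - int (\<tau> t)) \<omega>)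
          = (\<Sum>k=1..\<tau> t. \<eta> *\<^sub>R (B t \<omega> *v g (int t - int k) \<omega>))"
        unfolding A5 mv_sum by (simp add: matrix_vector_mult_scaleR)
      then have "b t \<omega> = (\<Sum>k=1..\<tau> t. \<eta> *\<^sub>R (B t \<omega> *v g (int t - int k) \<omega>)) + r t \<omega>"
        using A6[of t \<omega>] by simp
      then show ?thesis by (simp add: inner_add_right inner_sum_right sum_distrib_left)
    qed
    have Ic: "integrable M (\<lambda>\<omega>. gradL (\<theta> (int t) \<omega>) \<bullet> (B t \<omega> *v g (int t - int k) \<omega>))"
      if "k \<in> {1..\<tau> t}" for k using int_cross[of k t] that by auto
    have IS: "integrable M (\<lambda>\<omega>. \<Sum>k=1..\<tau> t. gradL (\<theta> (int t) \<omega>) \<bullet> (B t \<omega> *v g (int t - int k) \<omega>))"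
      using Ic by (auto intro!: integrable_sum)
    have Ir: "integrable M (\<lambda>\<omega>. gradL (\<theta> (int t) \<omega>) \<bullet> r t \<omega>)"
      unfolding pwb using Gb[of t] IS by auto
    have Er: "(\<integral>\<omega>. gradL (\<theta> (int t) \<omega>) \<bullet> r t \<omega> \<partial>M) \<ge> - (\<integral>\<omega>. norm (gradL (\<theta> (int t) \<omega>)) * norm (r t \<omega>) \<partial>M)"
    proof -
      have "(\<integral>\<omega>. - (norm (gradL (\<theta> (int t) \<omega>)) * norm (r t \<omega>)) \<partial>M) \<le> (\<integral>\<omega>. gradL (\<theta> (int t) \<omega>) \<bullet> r t \<omega> \<partial>M)"
      proof (rule integral_mono[OF _ Ir])
        show "integrable M (\<lambda>\<omega>. - (norm (gradL (\<theta> (int t) \<omega>)) * norm (r t \<omega>)))"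
          using int_gr[of t] by auto
        fix \<omega>
        show "- (norm (gradL (\<theta> (int t) \<omega>)) * norm (r t \<omega>)) \<le> gradL (\<theta> (int t) \<omega>) \<bullet> r t \<omega>"
          using Cauchy_Schwarz_ineq2[of "gradL (\<theta> (int t) \<omega>)" "r t \<omega>"] by (auto simp: abs_le_iff)
      qed
      then show ?thesis by simp
    qed
    have Eb: "(\<integral>\<omega>. gradL (\<theta> (int t) \<omega>) \<bullet> b t \<omega> \<partial>M)
        = \<eta> * (\<Sum>k=1..\<tau> t. \<integral>\<omega>. gradL (\<theta> (int t) \<omega>) \<bullet> (B t \<omega> *v g (int t - int k) \<omega>) \<partial>M)
          + (\<integral>\<omega>. gradL (\<theta> (int t) \<omega>) \<bullet> r t \<omega> \<partial>M)"
    proof -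
      have "(\<lambda>\<omega>. gradL (\<theta> (int t) \<omega>) \<bullet> b t \<omega>) = (\<lambda>\<omega>. \<eta> * (\<Sum>k=1..\<tau> t. gradL (\<theta> (int t) \<omega>) \<bullet> (B t \<omega> *v g (int t - int k) \<omega>))
          + gradL (\<theta> (int t) \<omega>) \<bullet> r t \<omega>)"
        using pwb by (auto simp: fun_eq_iff)
      then have "(\<integral>\<omega>. gradL (\<theta> (int t) \<omega>) \<bullet> b t \<omega> \<partial>M) = \<eta> * (\<integral>\<omega>. (\<Sum>k=1..\<tau> t. gradL (\<theta> (int t) \<omega>) \<bullet> (B t \<omega> *v g (int t - int k) \<omega>)) \<partial>M)
          + (\<integral>\<omega>. gradL (\<theta> (int t) \<omega>) \<bullet> r t \<omega> \<partial>M)"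
        using IS Ir by simp
      also have "(\<integral>\<omega>. (\<Sum>k=1..\<tau> t. gradL (\<theta> (int t) \<omega>) \<bullet> (B t \<omega> *v g (int t - int k) \<omega>)) \<partial>M)
          = (\<Sum>k=1..\<tau> t. \<integral>\<omega>. gradL (\<theta> (int t) \<omega>) \<bullet> (B t \<omega> *v g (int t - int k) \<omega>) \<partial>M)"
        using Ic by (auto intro!: Bochner_Integration.integral_sum)
      finally show ?thesis .
    qed
    have t1: "1 \<le> \<tau> t" using A5_range by auto
    have split: "(\<Sum>k=1..\<tau> t. \<integral>\<omega>. gradL (\<theta> (int t) \<omega>) \<bullet> (B t \<omega> *v g (int t - int k) \<omega>) \<partial>M)
        = (\<integral>\<omega>. gradL (\<theta> (int t) \<omega>) \<bullet> (B t \<omega> *v g (int t - 1) \<omega>) \<partial>M)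
          + (\<Sum>k=2..\<tau> t. \<integral>\<omega>. gradL (\<theta> (int t) \<omega>) \<bullet> (B t \<omega> *v g (int t - int k) \<omega>) \<partial>M)"
      by (subst sum.atLeast_Suc_atMost[OF t1]) (simp add: numeral_2_eq_2)
    have rest: "(\<Sum>k=2..\<tau> t. \<integral>\<omega>. gradL (\<theta> (int t) \<omega>) \<bullet> (B t \<omega> *v g (int t - int k) \<omega>) \<partial>M)
        \<ge> - (\<Sum>k=2..\<tau> t. \<integral>\<omega>. \<bar>gradL (\<theta> (int t) \<omega>) \<bullet> (B t \<omega> *v g (int t - int k) \<omega>)\<bar> \<partial>M)"
    proof -
      have "(\<Sum>k=2..\<tau> t. - (\<integral>\<omega>. \<bar>gradL (\<theta> (int t) \<omega>) \<bullet> (B t \<omega> *v g (int t - int k) \<omega>)\<bar> \<partial>M))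
         \<le> (\<Sum>k=2..\<tau> t. \<integral>\<omega>. gradL (\<theta> (int t) \<omega>) \<bullet> (B t \<omega> *v g (int t - int k) \<omega>) \<partial>M)"
      proof (rule sum_mono)
        fix k assume k: "k \<in> {2..\<tau> t}"
        then have ik: "integrable M (\<lambda>\<omega>. gradL (\<theta> (int t) \<omega>) \<bullet> (B t \<omega> *v g (int t - int k) \<omega>))"
          using int_cross[of k t] by auto
        have "(\<integral>\<omega>. - \<bar>gradL (\<theta> (int t) \<omega>) \<bullet> (B t \<omega> *v g (int t - int k) \<omega>)\<bar> \<partial>M)
           \<le> (\<integral>\<omega>. gradL (\<theta> (int t) \<omega>) \<bullet> (B t \<omega> *v g (int t - int k) \<omega>) \<partial>M)"
          by (rule integral_mono[OF _ ik]) (use ik in auto)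
        then show "- (\<integral>\<omega>. \<bar>gradL (\<theta> (int t) \<omega>) \<bullet> (B t \<omega> *v g (int t - int k) \<omega>)\<bar> \<partial>M)
           \<le> (\<integral>\<omega>. gradL (\<theta> (int t) \<omega>) \<bullet> (B t \<omega> *v g (int t - int k) \<omega>) \<partial>M)" by simp
      qed
      then show ?thesis by (simp add: sum_negf)
    qed
    have first: "(\<integral>\<omega>. gradL (\<theta> (int t) \<omega>) \<bullet> (B t \<omega> *v g (int t - 1) \<omega>) \<partial>M)
        \<ge> \<rho> t * lam t * (\<integral>\<omega>. (norm (g (int t - 1) \<omega>))\<^sup>2 \<partial>M) - \<delta> t"
    proof -
      have "\<rho> t * (lam t * (\<integral>\<omega>. (norm (g (int t - 1) \<omega>))\<^sup>2 \<partial>M))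
          \<le> \<rho> t * (\<integral>\<omega>. g (int t - 1) \<omega> \<bullet> (B t \<omega> *v g (int t - 1) \<omega>) \<partial>M)"
        using A7[of t] A8_rho[of t] by (intro mult_left_mono) auto
      then show ?thesis using A8[of t] by (simp add: mult.assoc)
    qed
    have "\<eta> * (\<rho> t * lam t * (\<integral>\<omega>. (norm (g (int t - 1) \<omega>))\<^sup>2 \<partial>M) - \<delta> t
        - (\<Sum>k=2..\<tau> t. \<integral>\<omega>. \<bar>gradL (\<theta> (int t) \<omega>) \<bullet> (B t \<omega> *v g (int t - int k) \<omega>)\<bar> \<partial>M))
      \<le> \<eta> * (\<Sum>k=1..\<tau> t. \<integral>\<omega>. gradL (\<theta> (int t) \<omega>) \<bullet> (B t \<omega> *v g (int t - int k) \<omega>) \<partial>M)"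
      using first rest etapos unfolding split by (intro mult_left_mono) auto
    then show ?thesis unfolding Eb Y_def Z_def using Er by (simp add: algebra_simps)
  qed
  have Lsup: "(\<integral>\<omega>. Lf (\<theta> (int T) \<omega>) \<partial>M) \<le> (SUP x. Lf x)"
  proof -
    have "(\<integral>\<omega>. Lf (\<theta> (int T) \<omega>) \<partial>M) \<le> (\<integral>\<omega>. (SUP x. Lf x) \<partial>M)"
      by (rule integral_mono[OF int_L]) (use A3 in \<open>auto intro: cSUP_upper\<close>)
    then show ?thesis by (simp add: P.prob_space)
  qed
  define a where "a = (\<lambda>t. \<integral>\<omega>. (norm (gradL (\<theta> (int t) \<omega>)))\<^sup>2 \<partial>M)"
  define \<beta> where "\<beta> = (\<lambda>t. (\<integral>\<omega>. (norm (b t \<omega>))\<^sup>2 \<partial>M))"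
  define EL where "EL = (\<lambda>t. (\<integral>\<omega>. Lf (\<theta> (int t) \<omega>) \<partial>M))"
  have st: "\<eta> / 2 * a t \<le> EL (Suc t) - EL t + \<eta> * (Y t - Z t) + 2 * Lip * \<eta>\<^sup>2 * \<beta> t + Lip * \<eta>\<^sup>2 * \<sigma>2" for t
  proof -
    have "- \<eta> * (\<integral>\<omega>. gradL (\<theta> (int t) \<omega>) \<bullet> b t \<omega> \<partial>M) \<le> \<eta> * (Y t - Z t)"
      using mult_left_mono[OF bias[of t], of \<eta>] etapos by simp
    then show ?thesis using stepI[of t] unfolding a_def \<beta>_def EL_def by linarith
  qed
  have sumst: "(\<Sum>t<T. \<eta> / 2 * a t) \<le> (\<Sum>t<T. (EL (Suc t) - EL t) + (\<eta> * (Y t - Z t) + 2 * Lip * \<eta>\<^sup>2 * \<beta> t + Lip * \<eta>\<^sup>2 * \<sigma>2))"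
    by (rule sum_mono) (use st in \<open>simp add: algebra_simps\<close>)
  also have "\<dots> = EL T - EL 0 + \<eta> * (\<Sum>t<T. Y t) - \<eta> * (\<Sum>t<T. Z t) + 2 * Lip * \<eta>\<^sup>2 * (\<Sum>t<T. \<beta> t) + real T * (Lip * \<eta>\<^sup>2 * \<sigma>2)"
  proof -
    have tel2: "(\<Sum>t<T. EL (Suc t)) - sum EL {..<T} = EL T - EL 0"
      using sum_lessThan_telescope[of EL T] by (simp add: sum_subtractf)
    show ?thesis
      by (simp add: sum.distrib tel2 sum_subtractf sum_distrib_left right_diff_distrib)
  qed
  finally have H: "\<eta> / 2 * (\<Sum>t<T. a t) \<le> (SUP x. Lf x) - EL 0 + \<eta> * (\<Sum>t<T. Y t) - \<eta> * (\<Sum>t<T. Z t) + 2 * Lip * \<eta>\<^sup>2 * (\<Sum>t<T. \<beta> t) + real T * (Lip * \<eta>\<^sup>2 * \<sigma>2)"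
    using Lsup unfolding EL_def by (simp add: sum_distrib_left)
  have Tpos: "real T > 0" using T1 by simp
  have minle: "real T * Min (a ` {0..<T}) \<le> (\<Sum>t<T. a t)"
  proof -
    have "(\<Sum>t<T. Min (a ` {0..<T})) \<le> (\<Sum>t<T. a t)"
      by (rule sum_mono) (auto intro: Min_le)
    then show ?thesis by simp
  qed
  have H': "\<eta> / 2 * (real T * Min (a ` {0..<T})) \<le> (SUP x. Lf x) - EL 0 + \<eta> * (\<Sum>t<T. Y t) - \<eta> * (\<Sum>t<T. Z t) + 2 * Lip * \<eta>\<^sup>2 * (\<Sum>t<T. \<beta> t) + real T * (Lip * \<eta>\<^sup>2 * \<sigma>2)"
  proof -
    have "\<eta> / 2 * (real T * Min (a ` {0..<T})) \<le> \<eta> / 2 * (\<Sum>t<T. a t)"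
      using minle etapos by (intro mult_left_mono) auto
    then show ?thesis using H by linarith
  qed
  have fin: "Min (a ` {0..<T}) \<le> 2 * ((SUP x. Lf x) - EL 0) / (\<eta> * real T) + 2 * Lip * \<eta> * \<sigma>2
      + 4 * Lip * \<eta> / real T * (\<Sum>t<T. \<beta> t) - 2 / real T * (\<Sum>t<T. Z t) + 2 / real T * (\<Sum>t<T. Y t)"
    by (rule final_alg[OF etapos Tpos H'])
  have EL0: "EL 0 = (\<integral>\<omega>. Lf (\<theta> 0 \<omega>) \<partial>M)" by (simp add: EL_def)
  show ?thesis using fin unfolding EL0 unfolding a_def \<beta>_def Y_def Z_def .
qed

end
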